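(* Assume the model (M.2) with $M_0>0$ and the sub-Gaussian condition (A.4) described in the context, and let Algorithm 2 be applied to $X_1,\ldots,X_N$. (i) For $k\in\{1,\ldots,M_0\}$ let $q_k(N)=250D\log N/(c_0|\mu_k-\mu_{k+1}|^2)$, and let $F_{k,N}$ be the event that there exist integers $1\le n_1<n_2<N_k$ and $1\le n_3\le N_{k+1}$ such that $\{X^{(k)}_n:n=n_1+1,\ldots,n_2\}$ and $\{X^{(k)}_n:n=n_2+1,\ldots,N_k\}\cup\{X^{(k+1)}_n:n=1,\ldots,n_3\}$ are two detected segments and $\min\{N_k-n_2,n_3\}>q_k(N)$. Then $\Pr(\limsup_{N\to\infty}F_{k,N})=0$. (ii) For $k\in\{2,\ldots,M_0+1\}$ let $\tilde q_k(N)=250D\log N/(c_0|\mu_{k-1}-\mu_k|^2)$, and let $\tilde F_{k,N}$ be the event that there exist integers $1\le n_1<n_2<N_k$ and $1\le n_3\le N_{k-1}$ such that $\{X^{(k-1)}_n:n=N_{k-1}-n_3+1,\ldots,N_{k-1}\}\cup\{X^{(k)}_n:n=1,\ldots,n_1\}$ and $\{X^{(k)}_n:n=n_1+1,\ldots,n_2\}$ are two detected segments and $\min\{n_1,n_3\}>\tilde q_k(N)$. Then $\Pr(\limsup_{N\to\infty}\tilde F_{k,N})=0$.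
   Context: Model (M.2): for each sample size $N$ one observes independent random vectors $X_1,\ldots,X_N\in\mathbb{R}^D$ ($D\in\mathbb{N}$ fixed). There are $M_0\ge 0$ (fixed) change points $0=L_0<L_1<\cdots<L_{M_0}<L_{M_0+1}=N$ (depending on $N$), with segment sizes $N_k=L_k-L_{k-1}$, $N_k\to\infty$; for each $k$, $X_{L_{k-1}+1},\ldots,X_{L_k}$ are i.i.d. with distribution $\mathcal{G}_k$ with mean $\mu_k$ and finite covariance; $\mu_k\neq\mu_{k+1}$. Write $X^{(k)}_n=X_{L_{k-1}+n}$, $n=1,\ldots,N_k$. (A.4): there is $c_0>0$ such that for every $k$, coordinate $d$, $n\ge1$ and $a>0$, the mean $\bar Z$ of $n$ i.i.d. copies of the $d$-th marginal of $\mathcal{G}_k$ satisfies $\Pr(|\bar Z-E\bar Z|\ge a)\le2e^{-c_0a^2n}$. Quadratic loss: $\mathrm{Loss}_q(x_a,\ldots,x_b)=\sum_{n=a}^b|x_n-\bar x|^2$, $\bar x$ the sample mean, $|\cdot|$ Euclidean norm. Algorithm 2 (inputs $M_{\max}\ge1$, penalty $f(N)>0$, minimal segment size $\beta(N)$): for $k=0,1,\ldots,M_{\max}$ compute $\hat e_k=\min\sum_{j=1}^{k+1}\mathrm{Loss}_q(x_{\ell_{j-1}+1},\ldots,x_{\ell_j})$ over $0=\ell_0<\ell_1<\cdots<\ell_{k+1}=N$ with a minimizer; if its smallest segment has size $<\beta(N)$, set $M=k-1$ and stop (else $M=M_{\max}$). Output $\hat M=\arg\min_{0\le k\le M}(\hat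 e_k+kf(N))$ and the change points $\hat\ell_1<\cdots<\hat\ell_{\hat M}$ of the minimizer for $k=\hat M$. The detected segments are the blocks $\{X_n:n=\hat\ell_{j-1}+1,\ldots,\hat\ell_j\}$, $j=1,\ldots,\hat M+1$ ($\hat\ell_0=0,\hat\ell_{\hat M+1}=N$); "two detected segments" means two neighboring ones, in the order listed. $\limsup_N E_N$ is the event that $E_N$ occurs for infinitely many $N$. *)

theory Defs
  imports "HOL-Probability.Probability"
begin

text \<open>Segmentations of the index range 1..N into k+1 blocks are encoded by the
  list ls = [l_1,...,l_k] of interior change points; the boundaries are
  0 = l_0 < l_1 < ... < l_k < l_(k+1) = N, and block j (j = 1..k+1) is
  the index range l_(j-1)+1 .. l_j.\<close>

definition seg_bounds :: "nat \<Rightarrow> nat list \<Rightarrow> nat list" where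
  "seg_bounds N ls = 0 # ls @ [N]"

definition valid_seg :: "nat \<Rightarrow> nat \<Rightarrow> nat list \<Rightarrow> bool" where
  "valid_seg N k ls \<longleftrightarrow> length ls = k \<and> sorted_wrt (<) (seg_bounds N ls)"

definition loss_q :: "(nat \<Rightarrow> 'a::real_normed_vector) \<Rightarrow> nat \<Rightarrow> nat \<Rightarrow> real" where
  "loss_q x a b =
     (let m = (1 / real (b + 1 - a)) *\<^sub>R (\<Sum>n=a..b. x n)
      in \<Sum>n=a..b. (norm (x n - m))\<^sup>2)"

definition seg_cost :: "(nat \<Rightarrow> 'a::real_normed_vector) \<Rightarrow> nat \<Rightarrow> nat list \<Rightarrow> real" where
  "seg_cost x N ls =
     (let b = seg_bounds N ls in \<Sum>j<length ls + 1. loss_q x (b!j + 1) (b!(j+1)))"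

definition is_minimizer :: "(nat \<Rightarrow> 'a::real_normed_vector) \<Rightarrow> nat \<Rightarrow> nat \<Rightarrow> nat list \<Rightarrow> bool" where
  "is_minimizer x N k ls \<longleftrightarrow>
     valid_seg N k ls \<and> (\<forall>ls'. valid_seg N k ls' \<longrightarrow> seg_cost x N ls \<le> seg_cost x N ls')"

definition min_seg_size :: "nat \<Rightarrow> nat list \<Rightarrow> nat" where
  "min_seg_size N ls =
     (let b = seg_bounds N ls in Min {b!(j+1) - b!j | j. j < length ls + 1})"

text \<open>alg_output Mmax f beta x N ls: ls is the list of change points output by
  Algorithm 2 on data x_1..x_N, for some choice s k of the minimizers computed for
  k = 0..Mmax and some choice of the argmin (ties).  If the algorithm stops already
  at k = 0 (so M = -1), no change point is output (ls = []).\<close>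
definition alg_output ::
  "nat \<Rightarrow> (nat \<Rightarrow> real) \<Rightarrow> (nat \<Rightarrow> real) \<Rightarrow> (nat \<Rightarrow> 'a::real_normed_vector) \<Rightarrow> nat \<Rightarrow> nat list \<Rightarrow> bool" where
  "alg_output Mmax f \<beta> x N ls \<longleftrightarrow>
     (\<exists>s. (\<forall>k\<le>Mmax. is_minimizer x N k (s k)) \<and>
        (let stop = {k. k \<le> Mmax \<and> real (min_seg_size N (s k)) < \<beta> N} in
         if stop \<noteq> {} \<and> Min stop = 0 then ls = []
         else (let M = (if stop = {} then Mmax else Min stop - 1) in
               \<exists>Mh. is_arg_min (\<lambda>k. seg_cost x N (s k) + real k * f N) (\<lambda>k. k \<le> M) Mh
                     \<and> ls = s Mh)))"

text \<open>Event F_{k,N} of part (i), for the change points L = L_N(.) and threshold q,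
  given the output change points ls (boundaries b).  Detected blocks j and j+1 are
  (b!(j-1), b!j] and (b!j, b!(j+1)].\<close>
definition event_F :: "(nat \<Rightarrow> nat) \<Rightarrow> nat \<Rightarrow> real \<Rightarrow> nat \<Rightarrow> nat list \<Rightarrow> bool" where
  "event_F L k q N ls \<longleftrightarrow>
     (let b = seg_bounds N ls in
      \<exists>j n1 n2 n3. 1 \<le> j \<and> j \<le> length ls \<and>
        1 \<le> n1 \<and> n1 < n2 \<and> n2 < L k - L (k-1) \<and> 1 \<le> n3 \<and> n3 \<le> L (k+1) - L k \<and>
        b!(j-1) = L (k-1) + n1 \<and> b!j = L (k-1) + n2 \<and> b!(j+1) = L k + n3 \<and>
        real (min (L k - L (k-1) - n2) n3) > q)"

definition event_F' :: "(nat \<Rightarrow> nat) \<Rightarrow> nat \<Rightarrow> real \<Rightarrow> nat \<Rightarrow> nat list \<Rightarrow> bool" where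
  "event_F' L k q N ls \<longleftrightarrow>
     (let b = seg_bounds N ls in
      \<exists>j n1 n2 n3. 1 \<le> j \<and> j \<le> length ls \<and>
        1 \<le> n1 \<and> n1 < n2 \<and> n2 < L k - L (k-1) \<and> 1 \<le> n3 \<and> n3 \<le> L (k-1) - L (k-2) \<and>
        n3 \<le> L (k-1) \<and>
        b!(j-1) = L (k-1) - n3 \<and> b!j = L (k-1) + n1 \<and> b!(j+1) = L (k-1) + n2 \<and>
        real (min n1 n3) > q)"

end

theory Submission
  imports Defs
begin

definition mean :: "(nat \<Rightarrow> 'a::real_normed_vector) \<Rightarrow> nat \<Rightarrow> nat \<Rightarrow> 'a" where
  "mean x a b = (1 / real (b + 1 - a)) *\<^sub>R (\<Sum>n=a..b. x n)"

lemma loss_q_mean: "loss_q x a b = (\<Sum>n=a..b. (norm (x n - mean x a b))\<^sup>2)"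
  by (simp add: loss_q_def mean_def Let_def)

lemma sumsq_ident:
  fixes x :: "nat \<Rightarrow> 'a::real_inner"
  assumes "a \<le> b"
  shows "(\<Sum>n=a..b. (norm (x n - c))\<^sup>2) = loss_q x a b + real (b+1-a) * (norm (mean x a b - c))\<^sup>2"
proof -
  let ?m = "mean x a b"
  have cnt: "real (b+1-a) > 0" using assms by simp
  have sm: "(\<Sum>n=a..b. x n) = real (b+1-a) *\<^sub>R ?m"
    using cnt by (simp add: mean_def)
  have "(\<Sum>n=a..b. (norm (x n - c))\<^sup>2) = (\<Sum>n=a..b. (norm (x n - ?m))\<^sup>2 + 2 * inner (x n - ?m) (?m - c) + (norm (?m - c))\<^sup>2)"
  proof (rule sum.cong[OF refl])
    fix n
    have e: "x n - c = (x n - ?m) + (?m - c)" by simp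
    show "(norm (x n - c))\<^sup>2 = (norm (x n - ?m))\<^sup>2 + 2 * inner (x n - ?m) (?m - c) + (norm (?m - c))\<^sup>2"
      unfolding e using dot_norm[of "x n - ?m" "?m - c"] by (simp only: field_simps)
  qed
  also have "\<dots> = (\<Sum>n=a..b. (norm (x n - ?m))\<^sup>2) + 2 * inner (\<Sum>n=a..b. x n - ?m) (?m - c) + real (b+1-a) * (norm (?m - c))\<^sup>2"
    by (simp only: sum.distrib sum_distrib_left[symmetric] inner_sum_left[symmetric] sum_constant) simp
  also have "(\<Sum>n=a..b. x n - ?m) = 0"
    by (simp add: sum_subtractf sm sum_constant_scaleR)
  finally show ?thesis by (simp add: loss_q_mean)
qed

lemma sq_sum_le: "((a::real)+b)^2 \<le> 2*(a^2+b^2)"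
proof -
  have "0 \<le> (a-b)^2" by simp
  thus ?thesis by (simp add: power2_eq_square algebra_simps)
qed

definition gain :: "(nat \<Rightarrow> 'a::real_normed_vector) \<Rightarrow> nat \<Rightarrow> nat \<Rightarrow> nat \<Rightarrow> real" where
  "gain x u v w = loss_q x (u+1) w - loss_q x (u+1) v - loss_q x (v+1) w"

lemma split_sum3: "(u::nat) \<le> v \<Longrightarrow> v \<le> w \<Longrightarrow> (\<Sum>n=u+1..w. g n) = (\<Sum>n=u+1..v. g n) + (\<Sum>n=v+1..w. (g n :: real))"
proof -
  assume "u \<le> v" "v \<le> w"
  then have "{u+1..w} = {u+1..v} \<union> {v+1..w}" by auto
  then show ?thesis by (simp add: sum.union_disjoint)
qed

lemma gain_upper:
  fixes x :: "nat \<Rightarrow> 'a::real_inner"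
  assumes "u < v" "v < w"
  shows "gain x u v w \<le> real (v-u) * (norm (mean x (u+1) v - c))\<^sup>2 + real (w-v) * (norm (mean x (v+1) w - c))\<^sup>2"
proof -
  have "loss_q x (u+1) w \<le> (\<Sum>n=u+1..w. (norm (x n - c))\<^sup>2)"
    using sumsq_ident[of "u+1" w x c] assms by simp
  also have "\<dots> = (\<Sum>n=u+1..v. (norm (x n - c))\<^sup>2) + (\<Sum>n=v+1..w. (norm (x n - c))\<^sup>2)"
    using assms by (intro split_sum3) auto
  also have "\<dots> = loss_q x (u+1) v + real (v-u) * (norm (mean x (u+1) v - c))\<^sup>2
      + (loss_q x (v+1) w + real (w-v) * (norm (mean x (v+1) w - c))\<^sup>2)"
    using sumsq_ident[of "u+1" v x c] sumsq_ident[of "v+1" w x c] assms by simp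
  finally show ?thesis by (simp add: gain_def)
qed

lemma gain_lower:
  fixes x :: "nat \<Rightarrow> 'a::real_inner"
  assumes "u < v" "v < w"
  shows "gain x u v w \<ge> real (min (v-u) (w-v)) / 2 * (norm (mean x (u+1) v - mean x (v+1) w))\<^sup>2"
proof -
  let ?m = "mean x (u+1) w" and ?m1 = "mean x (u+1) v" and ?m2 = "mean x (v+1) w"
  have "loss_q x (u+1) w = (\<Sum>n=u+1..w. (norm (x n - ?m))\<^sup>2)" by (simp add: loss_q_mean)
  also have "\<dots> = (\<Sum>n=u+1..v. (norm (x n - ?m))\<^sup>2) + (\<Sum>n=v+1..w. (norm (x n - ?m))\<^sup>2)"
    using assms by (intro split_sum3) auto
  also have "\<dots> = loss_q x (u+1) v + real (v-u) * (norm (?m1 - ?m))\<^sup>2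
      + (loss_q x (v+1) w + real (w-v) * (norm (?m2 - ?m))\<^sup>2)"
    using sumsq_ident[of "u+1" v x ?m] sumsq_ident[of "v+1" w x ?m] assms by simp
  finally have g: "gain x u v w = real (v-u) * (norm (?m1 - ?m))\<^sup>2 + real (w-v) * (norm (?m2 - ?m))\<^sup>2"
    by (simp add: gain_def)
  let ?mn = "real (min (v-u) (w-v))"
  have "norm (?m1 - ?m2) \<le> norm (?m1 - ?m) + norm (?m2 - ?m)"
    using norm_triangle_ineq4[of "?m1 - ?m" "?m2 - ?m"] by simp
  then have "(norm (?m1 - ?m2))\<^sup>2 \<le> (norm (?m1 - ?m) + norm (?m2 - ?m))\<^sup>2"
    by (simp add: power_mono)
  also have "\<dots> \<le> 2 * ((norm (?m1 - ?m))\<^sup>2 + (norm (?m2 - ?m))\<^sup>2)"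
    by (rule sq_sum_le)
  finally have h: "(norm (?m1 - ?m2))\<^sup>2 / 2 \<le> (norm (?m1 - ?m))\<^sup>2 + (norm (?m2 - ?m))\<^sup>2" by simp
  have "?mn / 2 * (norm (?m1 - ?m2))\<^sup>2 = ?mn * ((norm (?m1 - ?m2))\<^sup>2 / 2)" by simp
  also have "\<dots> \<le> ?mn * ((norm (?m1 - ?m))\<^sup>2 + (norm (?m2 - ?m))\<^sup>2)"
    by (intro mult_left_mono h) simp
  also have "\<dots> \<le> real (v-u) * (norm (?m1 - ?m))\<^sup>2 + real (w-v) * (norm (?m2 - ?m))\<^sup>2"
    unfolding distrib_left by (intro add_mono mult_right_mono) auto
  finally show ?thesis using g by simp
qed


lemma seg_bounds_upd:
  assumes "1 \<le> j" "j \<le> length ls"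
  shows "seg_bounds N (ls[j-1 := t]) = (seg_bounds N ls)[j := t]"
proof -
  obtain i where i: "j = Suc i" using assms by (cases j) auto
  then show ?thesis using assms by (simp add: seg_bounds_def list_update_append1)
qed

lemma sorted_upd:
  assumes s: "sorted_wrt (<) (b::nat list)" and j: "1 \<le> j" "j + 1 < length b"
    and t: "b!(j-1) < t" "t < b!(j+1)"
  shows "sorted_wrt (<) (b[j := t])"
proof -
  have mono: "\<And>i i'. i < i' \<Longrightarrow> i' < length b \<Longrightarrow> b!i < b!i'"
    using s by (simp add: sorted_wrt_iff_nth_less)
  have monole: "\<And>i i'. i \<le> i' \<Longrightarrow> i' < length b \<Longrightarrow> b!i \<le> b!i'"
    using mono by (metis le_eq_less_or_eq less_imp_le)
  show ?thesis unfolding sorted_wrt_iff_nth_less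
  proof (intro allI impI)
    fix i i' assume h0: "i < i'" and h: "i' < length (b[j := t])"
    then have h1: "i < i'" "i' < length b" by auto
    show "b[j := t] ! i < b[j := t] ! i'"
    proof (cases "i = j")
      case True
      then have "i' \<ge> j+1" using h1 by simp
      then have "b!(j+1) \<le> b!i'" using monole h1 by blast
      then show ?thesis using True h1 t by (simp add: nth_list_update)
    next
      case False
      note F = False
      show ?thesis
      proof (cases "i' = j")
        case True
        then have "i \<le> j - 1" using h1 by simp
        then have "b!i \<le> b!(j-1)" using monole h1 j by simp
        then show ?thesis using True F h1 t by (simp add: nth_list_update)
      next
        case False
        then show ?thesis using F h1 mono by (simp add: nth_list_update)
      qed
    qed
  qed
qed

lemma sum_two_support:
  fixes g :: "nat \<Rightarrow> real"
  assumes "1 \<le> j" "j < n" "\<And>i. i \<noteq> j - 1 \<Longrightarrow> i \<noteq> j \<Longrightarrow> g i = 0"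
  shows "(\<Sum>i<n. g i) = g (j-1) + g j"
proof -
  have "(\<Sum>i<n. g i) = (\<Sum>i\<in>{j-1, j}. g i)"
    using assms by (intro sum.mono_neutral_right) auto
  also have "\<dots> = g (j-1) + g j" using assms by simp
  finally show ?thesis .
qed

lemma swap_cost:
  assumes v: "valid_seg N K ls" and j: "1 \<le> j" "j \<le> length ls"
    and b: "b = seg_bounds N ls" and t: "b!(j-1) < t" "t < b!(j+1)"
  shows "valid_seg N K (ls[j-1 := t])"
    "seg_cost x N (ls[j-1 := t]) = seg_cost x N ls
        + (loss_q x (b!(j-1)+1) t + loss_q x (t+1) (b!(j+1)))
        - (loss_q x (b!(j-1)+1) (b!j) + loss_q x (b!j+1) (b!(j+1)))"
proof -
  have lb: "length b = length ls + 2" using b by (simp add: seg_bounds_def)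
  have sb: "sorted_wrt (<) b" using v b by (simp add: valid_seg_def)
  have eq: "seg_bounds N (ls[j-1 := t]) = b[j := t]" using seg_bounds_upd[OF j] b by simp
  show "valid_seg N K (ls[j-1 := t])"
    using v unfolding valid_seg_def eq using sorted_upd[OF sb j(1) _ t] lb j by simp
  let ?b' = "b[j := t]"
  let ?g = "\<lambda>i. loss_q x (?b'!i + 1) (?b'!(i+1)) - loss_q x (b!i + 1) (b!(i+1))"
  have "seg_cost x N (ls[j-1 := t]) - seg_cost x N ls = (\<Sum>i<length ls + 1. ?g i)"
    unfolding seg_cost_def Let_def eq b[symmetric] by (simp add: sum_subtractf)
  also have "\<dots> = ?g (j-1) + ?g j"
    by (rule sum_two_support) (use j lb in \<open>auto simp: nth_list_update\<close>)
  also have "\<dots> = (loss_q x (b!(j-1)+1) t + loss_q x (t+1) (b!(j+1)))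
        - (loss_q x (b!(j-1)+1) (b!j) + loss_q x (b!j+1) (b!(j+1)))"
    using j lb by (simp add: nth_list_update)
  finally show "seg_cost x N (ls[j-1 := t]) = seg_cost x N ls
        + (loss_q x (b!(j-1)+1) t + loss_q x (t+1) (b!(j+1)))
        - (loss_q x (b!(j-1)+1) (b!j) + loss_q x (b!j+1) (b!(j+1)))" by simp
qed

lemma no_improve:
  assumes m: "is_minimizer x N K ls" and j: "1 \<le> j" "j \<le> length ls"
    and b: "b = seg_bounds N ls" and t: "b!(j-1) < t" "t < b!(j+1)"
    and better: "loss_q x (b!(j-1)+1) t + loss_q x (t+1) (b!(j+1))
        < loss_q x (b!(j-1)+1) (b!j) + loss_q x (b!j+1) (b!(j+1))"
  shows False
proof -
  have v: "valid_seg N K ls" using m by (simp add: is_minimizer_def)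
  note sc = swap_cost(1)[OF v j b t] swap_cost(2)[OF v j b t, where x=x]
  have "seg_cost x N ls \<le> seg_cost x N (ls[j-1 := t])"
    using m sc(1) by (simp add: is_minimizer_def)
  then show False using sc(2) better by simp
qed

lemma alg_output_cases:
  assumes "alg_output Mmax f \<beta> x N ls"
  shows "ls = [] \<or> (\<exists>K. is_minimizer x N K ls)"
proof -
  from assms obtain s where s: "\<forall>k\<le>Mmax. is_minimizer x N k (s k)"
    and r: "(let stop = {k. k \<le> Mmax \<and> real (min_seg_size N (s k)) < \<beta> N} in
         if stop \<noteq> {} \<and> Min stop = 0 then ls = []
         else (let M = (if stop = {} then Mmax else Min stop - 1) in
               \<exists>Mh. is_arg_min (\<lambda>k. seg_cost x N (s k) + real k * f N) (\<lambda>k. k \<le> M) Mh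
                     \<and> ls = s Mh))"
    unfolding alg_output_def by blast
  define stop where "stop = {k. k \<le> Mmax \<and> real (min_seg_size N (s k)) < \<beta> N}"
  show ?thesis
  proof (cases "stop \<noteq> {} \<and> Min stop = 0")
    case True then show ?thesis using r unfolding stop_def Let_def by simp
  next
    case False
    define M where "M = (if stop = {} then Mmax else Min stop - 1)"
    have "M \<le> Mmax"
    proof (cases "stop = {}")
      case False
      have "finite stop" unfolding stop_def by auto
      then have "Min stop \<in> stop" using False by simp
      then show ?thesis unfolding M_def stop_def using False by auto
    qed (simp add: M_def)
    from r False obtain Mh where "is_arg_min (\<lambda>k. seg_cost x N (s k) + real k * f N) (\<lambda>k. k \<le> M) Mh"
      "ls = s Mh"
      unfolding stop_def[symmetric] M_def[symmetric] Let_def by auto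
    then have "Mh \<le> M" "ls = s Mh" by (auto simp: is_arg_min_def)
    then have "is_minimizer x N Mh ls" using s \<open>M \<le> Mmax\<close> by auto
    then show ?thesis by blast
  qed
qed


lemma gain_same:
  fixes x :: "nat \<Rightarrow> 'a::real_inner"
  assumes "u < v" "v < w"
    and d1: "(norm (mean x (u+1) v - c))\<^sup>2 \<le> 4 * \<Lambda> / real (v-u)"
    and d2: "(norm (mean x (v+1) w - c))\<^sup>2 \<le> 4 * \<Lambda> / real (w-v)"
  shows "gain x u v w \<le> 8 * \<Lambda>"
proof -
  have p1: "real (v-u) > 0" "real (w-v) > 0" using assms by auto
  have "real (v-u) * (norm (mean x (u+1) v - c))\<^sup>2 \<le> real (v-u) * (4 * \<Lambda> / real (v-u))"
    using d1 p1 by (intro mult_left_mono) auto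
  also have "\<dots> = 4 * \<Lambda>" using p1 by simp
  finally have a: "real (v-u) * (norm (mean x (u+1) v - c))\<^sup>2 \<le> 4 * \<Lambda>" .
  have "real (w-v) * (norm (mean x (v+1) w - c))\<^sup>2 \<le> real (w-v) * (4 * \<Lambda> / real (w-v))"
    using d2 p1 by (intro mult_left_mono) auto
  also have "\<dots> = 4 * \<Lambda>" using p1 by simp
  finally have b: "real (w-v) * (norm (mean x (v+1) w - c))\<^sup>2 \<le> 4 * \<Lambda>" .
  show ?thesis using gain_upper[OF assms(1,2), of x c] a b by simp
qed

lemma small_dev:
  fixes e :: "'a::real_normed_vector"
  assumes d: "(norm e)\<^sup>2 \<le> 4 * \<Lambda> / n" and n: "n > 250 * \<Lambda> / \<Delta>\<^sup>2" and L: "\<Lambda> > 0" and D: "\<Delta> > 0"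
  shows "norm e < \<Delta> / 4"
proof -
  have Dp: "\<Delta>\<^sup>2 > 0" using D by simp
  have q: "250 * \<Lambda> / \<Delta>\<^sup>2 > 0" using L Dp by simp
  have np: "n > 0" using n q by linarith
  have h: "250 * \<Lambda> < \<Delta>\<^sup>2 * n" using n Dp by (simp add: pos_divide_less_eq mult.commute)
  have h2: "64 * \<Lambda> < \<Delta>\<^sup>2 * n" using h L by linarith
  have h3: "64 * \<Lambda> / n < \<Delta>\<^sup>2" using h2 by (simp only: pos_divide_less_eq[OF np])
  have h4: "4 * \<Lambda> / n = (64 * \<Lambda> / n) / 16" by simp
  have "(norm e)\<^sup>2 < \<Delta>\<^sup>2 / 16" using d h3 h4 by linarith
  then have sq: "(norm e)\<^sup>2 < (\<Delta>/4)\<^sup>2" by (simp add: power_divide)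
  have "0 \<le> \<Delta>/4" using D by simp
  then show ?thesis using power_less_imp_less_base[OF sq] by blast
qed

lemma gain_cross:
  fixes x :: "nat \<Rightarrow> 'a::real_inner"
  assumes uv: "u < v" "v < w"
    and d1: "(norm (mean x (u+1) v - c1))\<^sup>2 \<le> 4 * \<Lambda> / real (v-u)"
    and d2: "(norm (mean x (v+1) w - c2))\<^sup>2 \<le> 4 * \<Lambda> / real (w-v)"
    and ne: "c1 \<noteq> c2" and L: "\<Lambda> > 0"
    and big: "real (min (v-u) (w-v)) > 250 * \<Lambda> / (norm (c1 - c2))\<^sup>2"
  shows "gain x u v w > 8 * \<Lambda>"
proof -
  let ?D = "norm (c1 - c2)" and ?m1 = "mean x (u+1) v" and ?m2 = "mean x (v+1) w"
  have D: "?D > 0" using ne by simp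
  have b1: "real (v-u) > 250 * \<Lambda> / ?D\<^sup>2" using big by simp
  have b2: "real (w-v) > 250 * \<Lambda> / ?D\<^sup>2" using big by simp
  have e1: "norm (?m1 - c1) < ?D / 4" by (rule small_dev[OF d1 b1 L D])
  have e2: "norm (?m2 - c2) < ?D / 4" by (rule small_dev[OF d2 b2 L D])
  have "?D \<le> norm (c1 - ?m1) + norm (?m1 - ?m2) + norm (?m2 - c2)"
  proof -
    have "c1 - c2 = (c1 - ?m1) + (?m1 - ?m2) + (?m2 - c2)" by simp
    then have "?D = norm ((c1 - ?m1) + (?m1 - ?m2) + (?m2 - c2))" by simp
    also have "\<dots> \<le> norm ((c1 - ?m1) + (?m1 - ?m2)) + norm (?m2 - c2)" by (rule norm_triangle_ineq)
    also have "\<dots> \<le> norm (c1 - ?m1) + norm (?m1 - ?m2) + norm (?m2 - c2)"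
      using norm_triangle_ineq[of "c1 - ?m1" "?m1 - ?m2"] by simp
    finally show ?thesis .
  qed
  then have "norm (?m1 - ?m2) > ?D / 2" using e1 e2 by (simp add: norm_minus_commute)
  then have sq: "(norm (?m1 - ?m2))\<^sup>2 > ?D\<^sup>2 / 4"
  proof -
    have "(?D/2)\<^sup>2 < (norm (?m1 - ?m2))\<^sup>2" using \<open>norm (?m1 - ?m2) > ?D / 2\<close> D
      by (intro power_strict_mono) auto
    then show ?thesis by (simp add: power_divide)
  qed
  let ?mn = "real (min (v-u) (w-v))"
  have mnp: "?mn > 0" using uv by simp
  have "8 * \<Lambda> < 250 * \<Lambda> / ?D\<^sup>2 * ?D\<^sup>2 / 8" using D L by simp
  also have "\<dots> \<le> ?mn * ?D\<^sup>2 / 8" using big D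
    by (intro divide_right_mono mult_right_mono) auto
  also have "\<dots> \<le> ?mn / 2 * (norm (?m1 - ?m2))\<^sup>2" using sq mnp by simp
  also have "\<dots> \<le> gain x u v w" by (rule gain_lower[OF uv])
  finally show ?thesis .
qed

lemma mean_component:
  fixes x :: "nat \<Rightarrow> real ^ 'd"
  assumes "n \<ge> 1"
  shows "mean x (p+1) (p+n) $ d = (1 / real n) * (\<Sum>i<n. x (p+1+i) $ d)"
proof -
  have "(\<Sum>m=p+1..p+n. x m $ d) = (\<Sum>i<n. x (p+1+i) $ d)"
  proof -
    have e: "{p+1..p+n} = {0+(p+1)..<n+(p+1)}" by auto
    show ?thesis unfolding e sum.shift_bounds_nat_ivl
      by (simp add: lessThan_atLeast0 add.commute)
  qed
  then show ?thesis by (simp add: mean_def sum_component)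
qed

lemma norm_sq_from_coords:
  fixes e :: "real ^ 'd"
  assumes "\<And>d. \<bar>e $ d\<bar> < s"
  shows "(norm e)\<^sup>2 \<le> real CARD('d) * s\<^sup>2"
proof -
  have "(norm e)\<^sup>2 = (\<Sum>d\<in>UNIV. (e $ d)\<^sup>2)"
    unfolding power2_norm_eq_inner inner_vec_def by (simp add: power2_eq_square)
  also have "\<dots> \<le> (\<Sum>d\<in>(UNIV::'d set). s\<^sup>2)"
  proof (rule sum_mono)
    fix d
    have "\<bar>e $ d\<bar>\<^sup>2 \<le> s\<^sup>2" using assms[of d] by (intro power_mono) auto
    then show "(e $ d)\<^sup>2 \<le> s\<^sup>2" by simp
  qed
  finally show ?thesis by simp
qed


definition good :: "(nat \<Rightarrow> nat) \<Rightarrow> nat \<Rightarrow> (nat \<Rightarrow> real ^ 'd) \<Rightarrow> real \<Rightarrow> nat \<Rightarrow> (nat \<Rightarrow> real ^ 'd) \<Rightarrow> bool" where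
  "good L M0 mu c0 N x \<longleftrightarrow> (\<forall>k\<in>{1..M0+1}. \<forall>p n. L (k-1) \<le> p \<longrightarrow> p+n \<le> L k \<longrightarrow> p+n \<le> N \<longrightarrow> 1 \<le> n \<longrightarrow>
     (\<forall>d. \<bar>(1 / real n) * (\<Sum>i<n. x (p+1+i) $ d) - mu k $ d\<bar> < sqrt (4 * ln (real N) / (c0 * real n))))"

lemma good_dev:
  fixes x :: "nat \<Rightarrow> real ^ 'd"
  assumes g: "good L M0 mu c0 N x" and k: "k \<in> {1..M0+1}" and p: "L (k-1) \<le> p" "p < p'" "p' \<le> L k" "p' \<le> N"
    and c0: "c0 > 0" and N: "N \<ge> 1"
  shows "(norm (mean x (p+1) p' - mu k))\<^sup>2 \<le> 4 * (real CARD('d) * ln (real N) / c0) / real (p'-p)"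
proof -
  define n where "n = p' - p"
  have n1: "n \<ge> 1" and pn: "p' = p + n" using p by (auto simp: n_def)
  define s where "s = sqrt (4 * ln (real N) / (c0 * real n))"
  have co: "\<bar>(mean x (p+1) p' - mu k) $ d\<bar> < s" for d
  proof -
    have e: "(mean x (p+1) p' - mu k) $ d = (1/real n) * (\<Sum>i<n. x (p+1+i) $ d) - mu k $ d"
      using mean_component[OF n1, of x p d] unfolding pn by simp
    have "\<forall>p n. L (k-1) \<le> p \<longrightarrow> p+n \<le> L k \<longrightarrow> p+n \<le> N \<longrightarrow> 1 \<le> n \<longrightarrow>
     (\<forall>d. \<bar>(1 / real n) * (\<Sum>i<n. x (p+1+i) $ d) - mu k $ d\<bar> < sqrt (4 * ln (real N) / (c0 * real n)))"
      using g k unfolding good_def by blast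
    then have "\<bar>(1 / real n) * (\<Sum>i<n. x (p+1+i) $ d) - mu k $ d\<bar> < s"
      unfolding s_def using p n1 pn by blast
    then show ?thesis using e by simp
  qed
  have "(norm (mean x (p+1) p' - mu k))\<^sup>2 \<le> real CARD('d) * s\<^sup>2"
    by (rule norm_sq_from_coords) (rule co)
  also have "s\<^sup>2 = 4 * ln (real N) / (c0 * real n)"
    unfolding s_def using c0 N n1 by (intro real_sqrt_pow2) auto
  finally show ?thesis unfolding n_def[symmetric] by (simp add: field_simps)
qed

lemma L_mono:
  assumes inc: "\<forall>k\<le>M0. (L::nat\<Rightarrow>nat) k < L (k+1)" and "a \<le> b" "b \<le> M0+1"
  shows "L a \<le> L b"
  using assms(2,3)
proof (induction b)
  case 0 then show ?case by simp
next
  case (Suc b)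
  show ?case
  proof (cases "a = Suc b")
    case False
    then have "a \<le> b" using Suc by simp
    then have "L a \<le> L b" using Suc by simp
    also have "L b < L (Suc b)" using inc Suc by simp
    finally show ?thesis by simp
  qed simp
qed

lemma det_i:
  fixes x :: "nat \<Rightarrow> real ^ 'd"
  assumes g: "good L M0 mu c0 N x" and inc: "\<forall>k\<le>M0. L k < L (k+1)" and LN: "L (M0+1) = N"
    and k: "k \<in> {1..M0}" and ne: "mu k \<noteq> mu (k+1)" and c0: "c0 > 0" and N: "N \<ge> 2"
    and m: "is_minimizer x N K ls"
  shows "\<not> event_F L k (250 * real CARD('d) * ln (real N) / (c0 * (norm (mu k - mu (k+1)))\<^sup>2)) N ls"
proof
  define \<Lambda> where "\<Lambda> = real CARD('d) * ln (real N) / c0"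
  have Lp: "\<Lambda> > 0" unfolding \<Lambda>_def using c0 N by (simp add: ln_gt_zero)
  have qe: "250 * real CARD('d) * ln (real N) / (c0 * (norm (mu k - mu (k+1)))\<^sup>2)
      = 250 * \<Lambda> / (norm (mu k - mu (k+1)))\<^sup>2" unfolding \<Lambda>_def by (simp add: field_simps)
  assume "event_F L k (250 * real CARD('d) * ln (real N) / (c0 * (norm (mu k - mu (k+1)))\<^sup>2)) N ls"
  then obtain j n1 n2 n3 where j: "1 \<le> j" "j \<le> length ls" and n: "1 \<le> n1" "n1 < n2" "n2 < L k - L (k-1)"
    "1 \<le> n3" "n3 \<le> L (k+1) - L k"
    and bb: "seg_bounds N ls ! (j-1) = L (k-1) + n1" "seg_bounds N ls ! j = L (k-1) + n2"
      "seg_bounds N ls ! (j+1) = L k + n3"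
    and q: "real (min (L k - L (k-1) - n2) n3) > 250 * \<Lambda> / (norm (mu k - mu (k+1)))\<^sup>2"
    unfolding event_F_def Let_def qe by blast
  define u where "u = L (k-1) + n1"
  define v where "v = L (k-1) + n2"
  define t where "t = L k"
  define w where "w = L k + n3"
  have lt: "L (k-1) < L k"
  proof -
    have "k - 1 \<le> M0" using k by auto
    then have "L (k-1) < L (k-1+1)" using inc by blast
    then show ?thesis using k by simp
  qed
  have LkN: "L (k+1) \<le> N" using L_mono[OF inc, of "k+1" "M0+1"] k LN by simp
  have LkN': "L k \<le> N" using L_mono[OF inc, of "k" "M0+1"] k LN by simp
  have o: "u < v" "v < t" "t < w" "w \<le> L (k+1)" using n lt by (auto simp: u_def v_def t_def w_def)
  have k1: "k \<in> {1..M0+1}" "k+1 \<in> {1..M0+1}" using k by auto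
  have d1: "(norm (mean x (u+1) v - mu k))\<^sup>2 \<le> 4 * \<Lambda> / real (v-u)"
    unfolding \<Lambda>_def by (rule good_dev[OF g k1(1)]) (use o c0 N LkN' in \<open>auto simp: u_def t_def\<close>)
  have d2: "(norm (mean x (v+1) t - mu k))\<^sup>2 \<le> 4 * \<Lambda> / real (t-v)"
    unfolding \<Lambda>_def by (rule good_dev[OF g k1(1)]) (use o c0 N LkN' in \<open>auto simp: v_def t_def\<close>)
  have d3: "(norm (mean x (t+1) w - mu (k+1)))\<^sup>2 \<le> 4 * \<Lambda> / real (w-t)"
    unfolding \<Lambda>_def by (rule good_dev[OF g k1(2)]) (use o c0 N LkN in \<open>auto simp: t_def\<close>)
  have g1: "gain x u v t \<le> 8 * \<Lambda>" by (rule gain_same[OF o(1,2) d1 d2])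
  have mn: "min (t - v) (w - t) = min (L k - L (k-1) - n2) n3"
    unfolding t_def v_def w_def by simp
  have g2: "gain x v t w > 8 * \<Lambda>"
    by (rule gain_cross[OF o(2,3) d2 d3 ne Lp]) (use q mn in simp)
  have better: "loss_q x (u+1) t + loss_q x (t+1) w < loss_q x (u+1) v + loss_q x (v+1) w"
    using g1 g2 unfolding gain_def by linarith
  show False
    by (rule no_improve[OF m j refl, of t]) (use bb better o in \<open>simp_all add: u_def v_def w_def\<close>)
qed

lemma det_ii:
  fixes x :: "nat \<Rightarrow> real ^ 'd"
  assumes g: "good L M0 mu c0 N x" and inc: "\<forall>k\<le>M0. L k < L (k+1)" and LN: "L (M0+1) = N"
    and k: "k \<in> {2..M0+1}" and ne: "mu (k-1) \<noteq> mu k" and c0: "c0 > 0" and N: "N \<ge> 2"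
    and m: "is_minimizer x N K ls"
  shows "\<not> event_F' L k (250 * real CARD('d) * ln (real N) / (c0 * (norm (mu (k-1) - mu k))\<^sup>2)) N ls"
proof
  define \<Lambda> where "\<Lambda> = real CARD('d) * ln (real N) / c0"
  have Lp: "\<Lambda> > 0" unfolding \<Lambda>_def using c0 N by (simp add: ln_gt_zero)
  have qe: "250 * real CARD('d) * ln (real N) / (c0 * (norm (mu (k-1) - mu k))\<^sup>2)
      = 250 * \<Lambda> / (norm (mu (k-1) - mu k))\<^sup>2" unfolding \<Lambda>_def by (simp add: field_simps)
  assume "event_F' L k (250 * real CARD('d) * ln (real N) / (c0 * (norm (mu (k-1) - mu k))\<^sup>2)) N ls"
  then obtain j n1 n2 n3 where j: "1 \<le> j" "j \<le> length ls" and n: "1 \<le> n1" "n1 < n2" "n2 < L k - L (k-1)"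
    "1 \<le> n3" "n3 \<le> L (k-1) - L (k-2)" "n3 \<le> L (k-1)"
    and bb: "seg_bounds N ls ! (j-1) = L (k-1) - n3" "seg_bounds N ls ! j = L (k-1) + n1"
      "seg_bounds N ls ! (j+1) = L (k-1) + n2"
    and q: "real (min n1 n3) > 250 * \<Lambda> / (norm (mu (k-1) - mu k))\<^sup>2"
    unfolding event_F'_def Let_def qe by blast
  define u where "u = L (k-1) - n3"
  define t where "t = L (k-1)"
  define v where "v = L (k-1) + n1"
  define w where "w = L (k-1) + n2"
  have kk: "k - 1 - 1 = k - 2" by simp
  have LkN: "L k \<le> N" using L_mono[OF inc, of "k" "M0+1"] k LN by simp
  have o: "u < t" "t < v" "v < w" "w < L k" "L (k-2) \<le> u" using n by (auto simp: u_def v_def t_def w_def)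
  have k1: "k \<in> {1..M0+1}" "k-1 \<in> {1..M0+1}" using k by auto
  have d1: "(norm (mean x (u+1) t - mu (k-1)))\<^sup>2 \<le> 4 * \<Lambda> / real (t-u)"
    unfolding \<Lambda>_def by (rule good_dev[OF g k1(2)]) (use o c0 N LkN kk in \<open>auto simp: t_def\<close>)
  have d2: "(norm (mean x (t+1) v - mu k))\<^sup>2 \<le> 4 * \<Lambda> / real (v-t)"
    unfolding \<Lambda>_def by (rule good_dev[OF g k1(1)]) (use o c0 N LkN in \<open>auto simp: t_def\<close>)
  have d3: "(norm (mean x (v+1) w - mu k))\<^sup>2 \<le> 4 * \<Lambda> / real (w-v)"
    unfolding \<Lambda>_def by (rule good_dev[OF g k1(1)]) (use o c0 N LkN in \<open>auto simp: v_def\<close>)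
  have g1: "gain x t v w \<le> 8 * \<Lambda>" by (rule gain_same[OF o(2,3) d2 d3])
  have mn: "min (t - u) (v - t) = min n1 n3"
    unfolding t_def v_def u_def using n by simp
  have g2: "gain x u t v > 8 * \<Lambda>"
    by (rule gain_cross[OF o(1,2) d1 d2 ne Lp]) (use q mn in simp)
  have better: "loss_q x (u+1) t + loss_q x (t+1) w < loss_q x (u+1) v + loss_q x (v+1) w"
    using g1 g2 unfolding gain_def by linarith
  show False
    by (rule no_improve[OF m j refl, of t]) (use bb better o in \<open>simp_all add: u_def v_def w_def\<close>)
qed


lemma (in prob_space) indep_vars_reindex:
  assumes inj: "inj_on f I" and ind: "indep_vars M' X (f ` I)"
  shows "indep_vars (\<lambda>i. M' (f i)) (\<lambda>i. X (f i)) I"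
proof -
  have rv: "\<forall>i\<in>I. random_variable (M' (f i)) (X (f i))"
    using ind unfolding indep_vars_def2 by auto
  have isf: "indep_sets (\<lambda>i. {X i -` A \<inter> space M | A. A \<in> sets (M' i)}) (f ` I)"
    using ind unfolding indep_vars_def2 by auto
  have "indep_sets (\<lambda>i. {X (f i) -` A \<inter> space M | A. A \<in> sets (M' (f i))}) I"
    unfolding indep_sets_def
  proof (intro conjI ballI allI impI)
    fix i assume "i \<in> I"
    then show "{X (f i) -` A \<inter> space M | A. A \<in> sets (M' (f i))} \<subseteq> events"
      using isf unfolding indep_sets_def by auto
  next
    fix J A assume J: "J \<subseteq> I" "J \<noteq> {}" "finite J"
      and A: "A \<in> Pi J (\<lambda>i. {X (f i) -` A \<inter> space M | A. A \<in> sets (M' (f i))})"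
    define A' where "A' = (\<lambda>j'. A (the_inv_into I f j'))"
    have injJ: "inj_on f J" using inj_on_subset[OF inj J(1)] .
    have A'f: "A' (f j) = A j" if "j \<in> J" for j
      unfolding A'_def using the_inv_into_f_f[OF inj] that J by auto
    have "A' \<in> Pi (f ` J) (\<lambda>i. {X i -` A \<inter> space M | A. A \<in> sets (M' i)})"
    proof
      fix j' assume "j' \<in> f ` J"
      then obtain j where j: "j \<in> J" "j' = f j" by auto
      have "A j \<in> {X (f j) -` A \<inter> space M | A. A \<in> sets (M' (f j))}" using A j by blast
      then show "A' j' \<in> {X j' -` A \<inter> space M | A. A \<in> sets (M' j')}" using A'f j by simp
    qed
    note A'P = this
    have all: "\<forall>J'\<subseteq>f ` I. J' \<noteq> {} \<longrightarrow> finite J' \<longrightarrow>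
        (\<forall>A\<in>Pi J' (\<lambda>i. {X i -` A \<inter> space M | A. A \<in> sets (M' i)}). prob (\<Inter>j\<in>J'. A j) = (\<Prod>j\<in>J'. prob (A j)))"
      using isf unfolding indep_sets_def by blast
    have fJ: "f ` J \<subseteq> f ` I" "f ` J \<noteq> {}" "finite (f ` J)" using J by auto
    have eq: "prob (\<Inter>j\<in>f ` J. A' j) = (\<Prod>j\<in>f ` J. prob (A' j))"
      using spec[OF all, of "f ` J"] fJ A'P by blast
    have "(\<Inter>j\<in>f ` J. A' j) = (\<Inter>j\<in>J. A j)" using A'f by auto
    moreover have "(\<Prod>j\<in>f ` J. prob (A' j)) = (\<Prod>j\<in>J. prob (A j))"
      using A'f by (simp add: prod.reindex[OF injJ])
    ultimately show "prob (\<Inter>j\<in>J. A j) = (\<Prod>j\<in>J. prob (A j))" using eq by simp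
  qed
  then show ?thesis using rv unfolding indep_vars_def2 by auto
qed

lemma (in prob_space) block_distr:
  fixes X :: "nat \<Rightarrow> 'a \<Rightarrow> real ^ 'd"
  assumes ind: "indep_vars (\<lambda>_. borel) X {1..N}" and n: "1 \<le> n" "p+n \<le> N"
    and rv: "\<forall>i<n. X (p+1+i) \<in> borel_measurable M \<and> distr M borel (X (p+1+i)) = Gk"
  shows "distr M (PiM {..<n} (\<lambda>_. borel)) (\<lambda>\<omega>. \<lambda>i\<in>{..<n}. X (p+1+i) \<omega>) = PiM {..<n} (\<lambda>_. Gk)"
proof -
  have img: "(\<lambda>i. p+1+i) ` {..<n} \<subseteq> {1..N}" using n by auto
  have inj: "inj_on (\<lambda>i. p+1+i) {..<n}" by (auto simp: inj_on_def)
  have "indep_vars (\<lambda>_. borel) X ((\<lambda>i. p+1+i) ` {..<n})"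
    by (rule indep_vars_subset[OF ind img])
  then have ind2: "indep_vars (\<lambda>_. borel) (\<lambda>i. X (p+1+i)) {..<n}"
    using indep_vars_reindex[OF inj] by fastforce
  have ne: "{..<n} \<noteq> {}" using n lessThan_empty_iff[of n] by simp
  have "distr M (PiM {..<n} (\<lambda>_. borel)) (\<lambda>\<omega>. \<lambda>i\<in>{..<n}. X (p+1+i) \<omega>)
      = PiM {..<n} (\<lambda>i. distr M borel (X (p+1+i)))"
    using indep_vars_iff_distr_eq_PiM'[OF ne, where M'="\<lambda>_. borel" and X="\<lambda>i. X (p+1+i)"] rv ind2 by auto
  also have "\<dots> = PiM {..<n} (\<lambda>_. Gk)"
    using rv by (intro PiM_cong) auto
  finally show ?thesis .
qed

lemma (in prob_space) block_prob:
  fixes X :: "nat \<Rightarrow> 'a \<Rightarrow> real ^ 'd"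
  assumes ind: "indep_vars (\<lambda>_. borel) X {1..N}" and n: "1 \<le> n" "p+n \<le> N"
    and rv: "\<forall>i<n. X (p+1+i) \<in> borel_measurable M \<and> distr M borel (X (p+1+i)) = Gk"
    and sg: "measure (PiM {..<n} (\<lambda>_. Gk))
           {z \<in> space (PiM {..<n} (\<lambda>_. Gk)). \<bar>(1 / real n) * (\<Sum>i<n. z i $ d) - c\<bar> \<ge> a} \<le> B"
  shows "{\<omega> \<in> space M. \<bar>(1 / real n) * (\<Sum>i<n. X (p+1+i) \<omega> $ d) - c\<bar> \<ge> a} \<in> events"
    "measure M {\<omega> \<in> space M. \<bar>(1 / real n) * (\<Sum>i<n. X (p+1+i) \<omega> $ d) - c\<bar> \<ge> a} \<le> B"
proof -
  let ?P = "PiM {..<n} (\<lambda>_. borel :: (real ^ 'd) measure)"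
  let ?Y = "\<lambda>\<omega>. \<lambda>i\<in>{..<n}. X (p+1+i) \<omega>"
  let ?S = "{z \<in> space ?P. \<bar>(1 / real n) * (\<Sum>i<n. z i $ d) - c\<bar> \<ge> a}"
  have Gk: "Gk = distr M borel (X (p+1))" using rv n by auto
  have sG: "sets Gk = sets borel" using Gk by simp
  have sP: "sets (PiM {..<n} (\<lambda>_. Gk)) = sets ?P" using sG by (intro sets_PiM_cong) auto
  have spP: "space (PiM {..<n} (\<lambda>_. Gk)) = space ?P" using sets_eq_imp_space_eq[OF sP] .
  have Ymeas: "?Y \<in> measurable M ?P"
    using rv by (intro measurable_restrict) auto
  have comp: "(\<lambda>z. z i $ d) \<in> borel_measurable ?P" if "i \<in> {..<n}" for i
    by (rule measurable_compose[OF measurable_component_singleton[OF that] borel_measurable_nth])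
  have f: "(\<lambda>z. \<bar>(1 / real n) * (\<Sum>i<n. z i $ d) - c\<bar>) \<in> borel_measurable ?P"
    using comp by (intro borel_measurable_abs borel_measurable_diff borel_measurable_times
        borel_measurable_sum measurable_const) auto
  have Smeas: "?S \<in> sets ?P"
    using f by measurable
  have pre: "?Y -` ?S \<inter> space M = {\<omega> \<in> space M. \<bar>(1 / real n) * (\<Sum>i<n. X (p+1+i) \<omega> $ d) - c\<bar> \<ge> a}"
    using measurable_space[OF Ymeas] by auto
  show "{\<omega> \<in> space M. \<bar>(1 / real n) * (\<Sum>i<n. X (p+1+i) \<omega> $ d) - c\<bar> \<ge> a} \<in> events"
    unfolding pre[symmetric] using Ymeas Smeas by (rule measurable_sets)
  have "measure M {\<omega> \<in> space M. \<bar>(1 / real n) * (\<Sum>i<n. X (p+1+i) \<omega> $ d) - c\<bar> \<ge> a}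
      = measure (distr M ?P ?Y) ?S"
    unfolding pre[symmetric] by (rule measure_distr[OF Ymeas Smeas, symmetric])
  also have "\<dots> = measure (PiM {..<n} (\<lambda>_. Gk)) ?S"
    using block_distr[OF ind n rv] by simp
  also have "?S = {z \<in> space (PiM {..<n} (\<lambda>_. Gk)). \<bar>(1 / real n) * (\<Sum>i<n. z i $ d) - c\<bar> \<ge> a}"
    using spP by simp
  finally show "measure M {\<omega> \<in> space M. \<bar>(1 / real n) * (\<Sum>i<n. X (p+1+i) \<omega> $ d) - c\<bar> \<ge> a} \<le> B"
    using sg by simp
qed


lemma exp_4ln: "N \<ge> (2::nat) \<Longrightarrow> exp (- (4 * ln (real N))) = 1 / real N ^ 4"
proof -
  assume N: "N \<ge> 2"
  then have "4 * ln (real N) = ln (real N ^ 4)" by (simp add: ln_realpow)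
  then have "exp (4 * ln (real N)) = real N ^ 4" using N by simp
  then show ?thesis by (simp add: exp_minus field_simps)
qed

lemma (in prob_space) AE_good:
  fixes X :: "nat \<Rightarrow> nat \<Rightarrow> 'a \<Rightarrow> real ^ 'd" and L :: "nat \<Rightarrow> nat \<Rightarrow> nat"
    and G :: "nat \<Rightarrow> (real ^ 'd) measure" and mu :: "nat \<Rightarrow> real ^ 'd"
  assumes indep: "\<forall>N. indep_vars (\<lambda>_. borel) (X N) {1..N}"
    and distr: "\<forall>N k n. k \<in> {1..M0+1} \<longrightarrow> L N (k-1) < n \<longrightarrow> n \<le> L N k \<longrightarrow>
                   X N n \<in> borel_measurable M \<and> distr M borel (X N n) = G k"
    and c0: "c0 > 0"
    and subgauss: "\<forall>k\<in>{1..M0+1}. \<forall>d. \<forall>n\<ge>1. \<forall>a>0.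
         measure (PiM {..<n} (\<lambda>_. G k))
           {z \<in> space (PiM {..<n} (\<lambda>_. G k)).
              \<bar>(1 / real n) * (\<Sum>i<n. z i $ d) - mu k $ d\<bar> \<ge> a}
         \<le> 2 * exp (- c0 * a\<^sup>2 * real n)"
  shows "AE \<omega> in M. eventually (\<lambda>N. good (L N) M0 mu c0 N (\<lambda>n. X N n \<omega>)) sequentially"
proof -
  define a where "a N n = sqrt (4 * ln (real N) / (c0 * real n))" for N n :: nat
  define Bad where "Bad N = (\<lambda>(k,p,n,d). {\<omega> \<in> space M. L N (k-1) \<le> p \<and> p+n \<le> L N k \<and> p+n \<le> N \<and>
      a N n \<le> \<bar>(1 / real n) * (\<Sum>i<n. X N (p+1+i) \<omega> $ d) - mu k $ d\<bar>})" for N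
  define Idx where "Idx N = {1..M0+1} \<times> {..<N} \<times> {1..N} \<times> (UNIV :: 'd set)" for N :: nat
  define A where "A N = (if N \<ge> 2 then \<Union>i\<in>Idx N. Bad N i else {})" for N
  have finIdx: "finite (Idx N)" for N unfolding Idx_def by auto
  have bad: "Bad N (k,p,n,d) \<in> events \<and> measure M (Bad N (k,p,n,d)) \<le> 2 / real N ^ 4"
    if N: "N \<ge> 2" and idx: "(k,p,n,d) \<in> Idx N" for N k p n d
  proof (cases "L N (k-1) \<le> p \<and> p+n \<le> L N k \<and> p+n \<le> N")
    case False
    then have "Bad N (k,p,n,d) = {}" unfolding Bad_def by auto
    then show ?thesis by simp
  next
    case True
    have eqB: "Bad N (k,p,n,d) = {\<omega> \<in> space M. \<bar>(1 / real n) * (\<Sum>i<n. X N (p+1+i) \<omega> $ d) - mu k $ d\<bar> \<ge> a N n}"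
      unfolding Bad_def using True by auto
    have n1: "1 \<le> n" and k: "k \<in> {1..M0+1}" using idx unfolding Idx_def by auto
    have pn: "p + n \<le> N" using True by simp
    have rv: "\<forall>i<n. X N (p+1+i) \<in> borel_measurable M \<and> distr M borel (X N (p+1+i)) = G k"
      using distr k True by auto
    have lnp: "ln (real N) > 0" using N by simp
    have apos: "a N n > 0" unfolding a_def using lnp c0 n1 by simp
    have asq: "(a N n)\<^sup>2 = 4 * ln (real N) / (c0 * real n)"
      unfolding a_def using lnp c0 n1 by (intro real_sqrt_pow2) simp
    have "- c0 * (a N n)\<^sup>2 * real n = - (4 * ln (real N))"
      unfolding asq using c0 n1 by (simp add: field_simps)
    then have ex: "2 * exp (- c0 * (a N n)\<^sup>2 * real n) = 2 / real N ^ 4"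
      using exp_4ln[OF N] by simp
    have sg: "measure (PiM {..<n} (\<lambda>_. G k))
           {z \<in> space (PiM {..<n} (\<lambda>_. G k)). \<bar>(1 / real n) * (\<Sum>i<n. z i $ d) - mu k $ d\<bar> \<ge> a N n}
         \<le> 2 / real N ^ 4"
      using subgauss[rule_format, OF k n1 apos, of d] ex by simp
    note bp = block_prob[OF spec[OF indep, of N] n1 pn rv sg]
    show ?thesis unfolding eqB using bp by simp
  qed
  have bad': "Bad N i \<in> events \<and> measure M (Bad N i) \<le> 2 / real N ^ 4"
    if N: "N \<ge> 2" and idx: "i \<in> Idx N" for N i
  proof -
    obtain k p n d where "i = (k,p,n,d)" by (cases i) auto
    then show ?thesis using bad[OF N] idx by simp
  qed
  have Ameas: "A N \<in> events" for N
    unfolding A_def using bad' finIdx by (auto intro!: sets.finite_UN)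
  have Abound: "measure M (A N) \<le> 2 * real (M0+1) * real CARD('d) * inverse (real N ^ 2)" for N
  proof (cases "N \<ge> 2")
    case False
    then show ?thesis unfolding A_def by simp
  next
    case True
    have "measure M (A N) \<le> (\<Sum>i\<in>Idx N. measure M (Bad N i))"
      unfolding A_def using True bad' by (simp add: measure_UNION_le[OF finIdx])
    also have "\<dots> \<le> (\<Sum>i\<in>Idx N. 2 / real N ^ 4)"
      using True bad' by (intro sum_mono) auto
    also have "\<dots> = real (card (Idx N)) * (2 / real N ^ 4)" by simp
    also have "card (Idx N) = (M0+1) * N * N * CARD('d)"
      unfolding Idx_def by (simp add: card_cartesian_product algebra_simps)
    also have "real ((M0+1) * N * N * CARD('d)) * (2 / real N ^ 4) = 2 * real (M0+1) * real CARD('d) * inverse (real N ^ 2)"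
      using True by (simp add: field_simps power_def)
    finally show ?thesis .
  qed
  have summ: "summable (\<lambda>N. measure M (A N))"
  proof (rule summable_comparison_test'[where N=0])
    show "summable (\<lambda>N. 2 * real (M0+1) * real CARD('d) * inverse (real N ^ 2))"
      by (intro summable_mult inverse_power_summable) simp
    show "norm (measure M (A N)) \<le> 2 * real (M0+1) * real CARD('d) * inverse (real N ^ 2)" for N
      using Abound[of N] by simp
  qed
  have "AE x in M. eventually (\<lambda>N. x \<in> space M - A N) sequentially"
    by (rule borel_cantelli_AE1[OF Ameas]) (simp_all add: summ emeasure_eq_measure)
  then show ?thesis
  proof (rule AE_mp, intro AE_I2 impI)
    fix \<omega> assume "eventually (\<lambda>N. \<omega> \<in> space M - A N) sequentially"
    from eventually_conj[OF this eventually_ge_at_top[of 2]]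
    show "eventually (\<lambda>N. good (L N) M0 mu c0 N (\<lambda>n. X N n \<omega>)) sequentially"
    proof (rule eventually_mono)
      fix N :: nat assume hN: "\<omega> \<in> space M - A N \<and> N \<ge> 2"
      then have h: "\<omega> \<in> space M - A N" and N: "N \<ge> 2" by auto
      show "good (L N) M0 mu c0 N (\<lambda>n. X N n \<omega>)"
        unfolding good_def
      proof (intro ballI allI impI)
        fix k p n d assume k: "k \<in> {1..M0+1}" and c: "L N (k-1) \<le> p" "p+n \<le> L N k" "p+n \<le> N" "1 \<le> n"
        have "(k,p,n,d) \<in> Idx N" unfolding Idx_def using k c by auto
        then have "\<omega> \<notin> Bad N (k,p,n,d)" using h N unfolding A_def by auto
        then have "\<not> a N n \<le> \<bar>(1 / real n) * (\<Sum>i<n. X N (p+1+i) \<omega> $ d) - mu k $ d\<bar>"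
          using h c unfolding Bad_def by auto
        then show "\<bar>(1 / real n) * (\<Sum>i<n. X N (p+1+i) \<omega> $ d) - mu k $ d\<bar> < sqrt (4 * ln (real N) / (c0 * real n))"
          unfolding a_def by simp
      qed
    qed
  qed
qed


theorem lemma8:
  fixes M :: "'w measure"
    and X :: "nat \<Rightarrow> nat \<Rightarrow> 'w \<Rightarrow> real ^ 'd"
    and L :: "nat \<Rightarrow> nat \<Rightarrow> nat"
    and M0 :: nat
    and G :: "nat \<Rightarrow> (real ^ 'd) measure"
    and mu :: "nat \<Rightarrow> real ^ 'd"
    and c0 :: real
    and Mmax :: nat and f :: "nat \<Rightarrow> real" and \<beta> :: "nat \<Rightarrow> real"
    and out :: "nat \<Rightarrow> (nat \<Rightarrow> real ^ 'd) \<Rightarrow> nat list"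
  assumes P: "prob_space M"
    and M0_pos: "M0 > 0"
    and cps: "eventually (\<lambda>N. L N 0 = 0 \<and> L N (M0+1) = N \<and>
                 (\<forall>k\<le>M0. L N k < L N (k+1))) sequentially"
    and seg_inf: "\<forall>k\<in>{1..M0+1}. filterlim (\<lambda>N. L N k - L N (k-1)) at_top sequentially"
    and indep: "\<forall>N. prob_space.indep_vars M (\<lambda>_. borel) (X N) {1..N}"
    and distr: "\<forall>N k n. k \<in> {1..M0+1} \<longrightarrow> L N (k-1) < n \<longrightarrow> n \<le> L N k \<longrightarrow>
                   X N n \<in> borel_measurable M \<and> distr M borel (X N n) = G k"
    and moments: "\<forall>k\<in>{1..M0+1}. integrable (G k) (\<lambda>x. x) \<and>
                    integrable (G k) (\<lambda>x. (norm x)\<^sup>2)"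
    and mu_def: "\<forall>k\<in>{1..M0+1}. mu k = integral\<^sup>L (G k) (\<lambda>x. x)"
    and mu_change: "\<forall>k\<in>{1..M0}. mu k \<noteq> mu (k+1)"
    and c0_pos: "c0 > 0"
    and subgauss: "\<forall>k\<in>{1..M0+1}. \<forall>d. \<forall>n\<ge>1. \<forall>a>0.
         measure (PiM {..<n} (\<lambda>_. G k))
           {z \<in> space (PiM {..<n} (\<lambda>_. G k)).
              \<bar>(1 / real n) * (\<Sum>i<n. z i $ d) - mu k $ d\<bar> \<ge> a}
         \<le> 2 * exp (- c0 * a\<^sup>2 * real n)"
    and Mmax_pos: "Mmax \<ge> 1"
    and f_pos: "\<forall>N. f N > 0"
    and out_alg: "\<forall>N x. Mmax < N \<longrightarrow> alg_output Mmax f \<beta> x N (out N x)"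
  shows
    "(\<forall>k\<in>{1..M0}. AE \<omega> in M. eventually (\<lambda>N. \<not> event_F (L N) k
        (250 * real CARD('d) * ln (real N) / (c0 * (norm (mu k - mu (k+1)))\<^sup>2))
        N (out N (\<lambda>n. X N n \<omega>))) sequentially)
   \<and> (\<forall>k\<in>{2..M0+1}. AE \<omega> in M. eventually (\<lambda>N. \<not> event_F' (L N) k
        (250 * real CARD('d) * ln (real N) / (c0 * (norm (mu (k-1) - mu k))\<^sup>2))
        N (out N (\<lambda>n. X N n \<omega>))) sequentially)"
proof -
  interpret prob_space M by (rule P)
  have AEg: "AE \<omega> in M. eventually (\<lambda>N. good (L N) M0 mu c0 N (\<lambda>n. X N n \<omega>)) sequentially"
    by (rule AE_good[OF indep distr c0_pos subgauss])
  have ev: "eventually (\<lambda>N. L N (M0+1) = N \<and> (\<forall>k\<le>M0. L N k < L N (k+1)) \<and> N \<ge> 2 \<and> Mmax < N) sequentially"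
    using eventually_conj[OF cps eventually_conj[OF eventually_ge_at_top[of 2] eventually_gt_at_top[of Mmax]]]
    by (rule eventually_mono) auto
  have key: "ls = [] \<or> (\<exists>K. is_minimizer (\<lambda>n. X N n \<omega>) N K ls)"
    if "ls = out N (\<lambda>n. X N n \<omega>)" "Mmax < N" for N \<omega> ls
    using alg_output_cases[of Mmax f \<beta> "\<lambda>n. X N n \<omega>" N ls] out_alg that by auto
  show ?thesis
  proof (intro conjI ballI)
    fix k assume k: "k \<in> {1..M0}"
    have ne: "mu k \<noteq> mu (k+1)" using mu_change k by auto
    show "AE \<omega> in M. eventually (\<lambda>N. \<not> event_F (L N) k
        (250 * real CARD('d) * ln (real N) / (c0 * (norm (mu k - mu (k+1)))\<^sup>2))
        N (out N (\<lambda>n. X N n \<omega>))) sequentially"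
      using AEg
    proof (rule eventually_mono)
      fix \<omega> assume "eventually (\<lambda>N. good (L N) M0 mu c0 N (\<lambda>n. X N n \<omega>)) sequentially"
      from eventually_conj[OF this ev]
      show "eventually (\<lambda>N. \<not> event_F (L N) k
        (250 * real CARD('d) * ln (real N) / (c0 * (norm (mu k - mu (k+1)))\<^sup>2))
        N (out N (\<lambda>n. X N n \<omega>))) sequentially"
      proof (rule eventually_mono)
        fix N assume h: "good (L N) M0 mu c0 N (\<lambda>n. X N n \<omega>) \<and> L N (M0+1) = N \<and> (\<forall>k\<le>M0. L N k < L N (k+1)) \<and> N \<ge> 2 \<and> Mmax < N"
        from key[OF refl, of N \<omega>] h
        consider "out N (\<lambda>n. X N n \<omega>) = []" | K where "is_minimizer (\<lambda>n. X N n \<omega>) N K (out N (\<lambda>n. X N n \<omega>))"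
          by blast
        then show "\<not> event_F (L N) k
          (250 * real CARD('d) * ln (real N) / (c0 * (norm (mu k - mu (k+1)))\<^sup>2))
          N (out N (\<lambda>n. X N n \<omega>))"
        proof cases
          case 1 then show ?thesis by (simp add: event_F_def Let_def)
        next
          case 2
          show ?thesis by (rule det_i[OF _ _ _ k ne c0_pos _ 2]) (use h in auto)
        qed
      qed
    qed
  next
    fix k assume k: "k \<in> {2..M0+1}"
    have k1: "k-1 \<in> {1..M0}" using k by auto
    have "mu (k-1) \<noteq> mu (k-1+1)" using mu_change k1 by blast
    then have ne: "mu (k-1) \<noteq> mu k" using k by simp
    show "AE \<omega> in M. eventually (\<lambda>N. \<not> event_F' (L N) k
        (250 * real CARD('d) * ln (real N) / (c0 * (norm (mu (k-1) - mu k))\<^sup>2))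
        N (out N (\<lambda>n. X N n \<omega>))) sequentially"
      using AEg
    proof (rule eventually_mono)
      fix \<omega> assume "eventually (\<lambda>N. good (L N) M0 mu c0 N (\<lambda>n. X N n \<omega>)) sequentially"
      from eventually_conj[OF this ev]
      show "eventually (\<lambda>N. \<not> event_F' (L N) k
        (250 * real CARD('d) * ln (real N) / (c0 * (norm (mu (k-1) - mu k))\<^sup>2))
        N (out N (\<lambda>n. X N n \<omega>))) sequentially"
      proof (rule eventually_mono)
        fix N assume h: "good (L N) M0 mu c0 N (\<lambda>n. X N n \<omega>) \<and> L N (M0+1) = N \<and> (\<forall>k\<le>M0. L N k < L N (k+1)) \<and> N \<ge> 2 \<and> Mmax < N"
        from key[OF refl, of N \<omega>] h
        consider "out N (\<lambda>n. X N n \<omega>) = []" | K where "is_minimizer (\<lambda>n. X N n \<omega>) N K (out N (\<lambda>n. X N n \<omega>))"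
          by blast
        then show "\<not> event_F' (L N) k
          (250 * real CARD('d) * ln (real N) / (c0 * (norm (mu (k-1) - mu k))\<^sup>2))
          N (out N (\<lambda>n. X N n \<omega>))"
        proof cases
          case 1 then show ?thesis by (simp add: event_F'_def Let_def)
        next
          case 2
          show ?thesis by (rule det_ii[OF _ _ _ k ne c0_pos _ 2]) (use h in auto)
        qed
      qed
    qed
  qed
qed

end
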